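(* Let $(\mathcal{X},\rho)$ be a metric space, let $(x_1,y_1),\dots,(x_n,y_n)\in\mathcal{X}\times\{-1,1\}$, and let $L>0$. Define $k(L)$ as the minimum, over all $f:\mathcal{X}\to\mathbb{R}$ with Lipschitz constant at most $L$, of $|\{i\in[n]: y_if(x_i)<1\}|$. Let $G_L$ be the bipartite graph with vertex set $[n]$, parts $\{i:y_i=1\}$ and $\{i:y_i=-1\}$, and an edge $\{i,j\}$ whenever $y_i=1$, $y_j=-1$ and $\rho(x_i,x_j)<2/L$. Then $k(L)$ equals the size of a minimum vertex cover of $G_L$ (equivalently, by König's theorem, the size of a maximum matching of $G_L$).
   Context: The Lipschitz constant of $f$ is the smallest $L\ge0$ with $|f(x)-f(x')|\le L\rho(x,x')$ for all $x,x'$. A vertex cover of a graph is a set of vertices meeting every edge. *)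

theory Defs
  imports "HOL-Analysis.Analysis"
begin

definition margin_errors :: "nat \<Rightarrow> (nat \<Rightarrow> 'a) \<Rightarrow> (nat \<Rightarrow> real) \<Rightarrow> ('a \<Rightarrow> real) \<Rightarrow> nat" where
  "margin_errors n x y f = card {i \<in> {1..n}. y i * f (x i) < 1}"

definition kL :: "nat \<Rightarrow> (nat \<Rightarrow> 'a::metric_space) \<Rightarrow> (nat \<Rightarrow> real) \<Rightarrow> real \<Rightarrow> nat" where
  "kL n x y L = Min {margin_errors n x y f | f :: 'a \<Rightarrow> real. L-lipschitz_on UNIV f}"

definition GL_edge :: "(nat \<Rightarrow> 'a::metric_space) \<Rightarrow> (nat \<Rightarrow> real) \<Rightarrow> real \<Rightarrow> nat \<Rightarrow> nat \<Rightarrow> bool" where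
  "GL_edge x y L i j \<longleftrightarrow> y i = 1 \<and> y j = -1 \<and> dist (x i) (x j) < 2 / L"

definition is_vertex_cover :: "nat set \<Rightarrow> (nat \<Rightarrow> nat \<Rightarrow> bool) \<Rightarrow> nat set \<Rightarrow> bool" where
  "is_vertex_cover V E C \<longleftrightarrow> C \<subseteq> V \<and> (\<forall>i\<in>V. \<forall>j\<in>V. E i j \<longrightarrow> i \<in> C \<or> j \<in> C)"

definition min_vertex_cover_size :: "nat set \<Rightarrow> (nat \<Rightarrow> nat \<Rightarrow> bool) \<Rightarrow> nat" where
  "min_vertex_cover_size V E = Min {card C | C. is_vertex_cover V E C}"

end

theory Submission
  imports Defs
begin

lemma infdist_ge_aux:
  assumes "A \<noteq> {}" "\<And>a. a \<in> A \<Longrightarrow> d \<le> dist z a"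
  shows "d \<le> infdist z A"
  using assms unfolding infdist_def by (auto intro!: cINF_greatest)

lemma lip_part:
  fixes f :: "'a::metric_space \<Rightarrow> real"
  assumes "L-lipschitz_on UNIV f" "y i = 1" "y j = -1" "dist (xi) (xj) < 2 / L"
    "\<not> y i * f xi < 1" "\<not> y j * f xj < 1" "L > 0"
  shows False
proof -
  have "dist (f xi) (f xj) \<le> L * dist xi xj" using assms(1) unfolding lipschitz_on_def by auto
  also have "\<dots> < L * (2 / L)" using assms(4,7) by (simp add: mult.commute pos_less_divide_eq)
  also have "\<dots> = 2" using assms by simp
  finally have "dist (f xi) (f xj) < 2" .
  moreover have "f xi \<ge> 1" "f xj \<le> -1" using assms by auto
  ultimately show False by (simp add: dist_real_def)
qed

theorem mainTheorem7:
  fixes x :: "nat \<Rightarrow> 'a::metric_space" and y :: "nat \<Rightarrow> real" and n :: nat and L :: real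
  assumes "\<forall>i\<in>{1..n}. y i = 1 \<or> y i = -1"
    and "L > 0"
  shows "kL n x y L = min_vertex_cover_size {1..n} (GL_edge x y L)"
proof -
  define S where "S = {margin_errors n x y f | f :: 'a \<Rightarrow> real. L-lipschitz_on UNIV f}"
  define T where "T = {card C | C. is_vertex_cover {1..n} (GL_edge x y L) C}"
  have cP: "card {i \<in> {1..n}. P i} \<le> n" for P :: "nat \<Rightarrow> bool"
    using card_mono[of "{1..n}" "{i \<in> {1..n}. P i}"] by (metis (no_types, lifting) card_atLeastAtMost diff_Suc_1 finite_atLeastAtMost mem_Collect_eq subsetI)
  have cC: "card C \<le> n" if "is_vertex_cover {1..n} (GL_edge x y L) C" for C
    using that card_mono[of "{1..n}" C] by (simp add: is_vertex_cover_def)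
  have Sb: "S \<subseteq> {..n}" unfolding S_def margin_errors_def using cP by auto
  have Tb: "T \<subseteq> {..n}" unfolding T_def using cC by auto
  have fS: "finite S" and fT: "finite T" using Sb Tb finite_subset by blast+
  have ST: "\<exists>b\<in>T. b \<le> a" if aS: "a \<in> S" for a
  proof -
    obtain f :: "'a \<Rightarrow> real" where f: "L-lipschitz_on UNIV f" and a: "a = margin_errors n x y f"
      using aS S_def by auto
    let ?C = "{i \<in> {1..n}. y i * f (x i) < 1}"
    have "is_vertex_cover {1..n} (GL_edge x y L) ?C"
      unfolding is_vertex_cover_def
    proof (intro conjI ballI impI)
      fix i j assume "i \<in> {1..n}" "j \<in> {1..n}" "GL_edge x y L i j"
      then show "i \<in> ?C \<or> j \<in> ?C"
        using lip_part[OF f, of y i j "x i" "x j"] assms(2) unfolding GL_edge_def by auto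
    qed auto
    then show ?thesis unfolding T_def a margin_errors_def by auto
  qed
  have TS: "\<exists>a\<in>S. a \<le> b" if bT: "b \<in> T" for b
  proof -
    obtain C where C: "is_vertex_cover {1..n} (GL_edge x y L) C" and b: "b = card C"
      using bT T_def by auto
    define N where "N = x ` {j \<in> {1..n} - C. y j = -1}"
    define f :: "'a \<Rightarrow> real" where
      "f = (if N = {} then (\<lambda>_. 1) else (\<lambda>z. min 1 (L * infdist z N - 1)))"
    have lip: "L-lipschitz_on UNIV f"
    proof (cases "N = {}")
      case True then show ?thesis using assms(2) unfolding f_def lipschitz_on_def by auto
    next
      case False
      have "dist (min 1 (L * infdist u N - 1)) (min 1 (L * infdist v N - 1)) \<le> L * dist u v" for u v
      proof -
        have "\<bar>infdist u N - infdist v N\<bar> \<le> dist u v" by (rule infdist_triangle_abs)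
        then have "\<bar>L * infdist u N - L * infdist v N\<bar> \<le> L * dist u v"
          using assms(2) by (metis abs_mult abs_of_pos mult_left_mono right_diff_distrib less_imp_le)
        then show ?thesis by (simp add: dist_real_def abs_le_iff min_def)
      qed
      then show ?thesis using False assms(2) unfolding f_def lipschitz_on_def by auto
    qed
    have sub: "{i \<in> {1..n}. y i * f (x i) < 1} \<subseteq> C"
    proof
      fix i assume i: "i \<in> {i \<in> {1..n}. y i * f (x i) < 1}"
      show "i \<in> C"
      proof (rule ccontr)
        assume iC: "i \<notin> C"
        from assms(1) i have "y i = 1 \<or> y i = -1" by auto
        then show False
        proof
          assume yi: "y i = 1"
          show False
          proof (cases "N = {}")
            case True then show False using i yi unfolding f_def by simp
          next
            case False
            have "2 / L \<le> infdist (x i) N"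
            proof (rule infdist_ge_aux[OF False])
              fix a assume "a \<in> N"
              then obtain j where j: "j \<in> {1..n}" "j \<notin> C" "y j = -1" "a = x j" unfolding N_def by auto
              have ii: "i \<in> {1..n}" using i by simp
              have "\<not> GL_edge x y L i j" using C iC j(1,2) ii unfolding is_vertex_cover_def by blast
              then show "2 / L \<le> dist (x i) a" using yi j unfolding GL_edge_def by auto
            qed
            then have "L * infdist (x i) N \<ge> 2" using assms(2)
              by (metis divide_le_eq mult.commute)
            then have "f (x i) = 1" using False unfolding f_def by simp
            then show False using i yi by simp
          qed
        next
          assume yi: "y i = -1"
          have N: "x i \<in> N" using i iC yi unfolding N_def by auto
          then have "f (x i) = -1" unfolding f_def by auto
          then show False using i yi by simp
        qed
      qed
    qed
    have "margin_errors n x y f \<le> card C"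
      unfolding margin_errors_def
      by (rule card_mono[OF _ sub]) (use C in \<open>auto simp: is_vertex_cover_def intro: finite_subset\<close>)
    then show ?thesis using lip unfolding S_def b by auto
  qed
  have Sne: "S \<noteq> {}"
  proof -
    show ?thesis unfolding S_def using assms(2)
      by (auto intro!: exI[of _ "\<lambda>_. 0"] simp: lipschitz_on_def)
  qed
  have Tne: "T \<noteq> {}" unfolding T_def is_vertex_cover_def by auto
  have "Min S = Min T"
  proof (rule antisym)
    obtain a where "a \<in> S" "a \<le> Min T" using TS[OF Min_in[OF fT Tne]] by auto
    then show "Min S \<le> Min T" using Min_le[OF fS] by (meson order.trans)
  next
    obtain b where "b \<in> T" "b \<le> Min S" using ST[OF Min_in[OF fS Sne]] by auto
    then show "Min T \<le> Min S" using Min_le[OF fT] by (meson order.trans)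
  qed
  then show ?thesis unfolding kL_def min_vertex_cover_size_def S_def T_def .
qed

end
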